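(* Let $G$ be a connected bipartite graph with bipartition $(A,B)$, with $|A|,|B|\ge2$, that admits no 1-join. Then there exists $a\in A$ such that $G\setminus N[a]$ is connected.
   Context: $N[a]$ is the set consisting of $a$ and its neighbours. $G$ admits a 1-join $(V_1,V_2)$ if $(V_1,V_2)$ is a partition of $V(G)$ with $|V_1|,|V_2|\ge2$ and there are $X_1\subseteq V_1$, $X_2\subseteq V_2$ such that $X_1$ is complete to $X_2$ and there are no other edges between $V_1$ and $V_2$. *)

theory Defs
  imports Main
begin

definition graph :: "'a set \<Rightarrow> ('a \<Rightarrow> 'a \<Rightarrow> bool) \<Rightarrow> bool" where
  "graph V E \<longleftrightarrow> finite V \<and> (\<forall>x y. E x y \<longrightarrow> x \<in> V \<and> y \<in> V \<and> x \<noteq> y \<and> E y x)"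

definition connected_on :: "('a \<Rightarrow> 'a \<Rightarrow> bool) \<Rightarrow> 'a set \<Rightarrow> bool" where
  "connected_on E S \<longleftrightarrow> (\<forall>x\<in>S. \<forall>y\<in>S. (\<lambda>u v. u \<in> S \<and> v \<in> S \<and> E u v)\<^sup>*\<^sup>* x y)"

definition bipartition :: "'a set \<Rightarrow> ('a \<Rightarrow> 'a \<Rightarrow> bool) \<Rightarrow> 'a set \<Rightarrow> 'a set \<Rightarrow> bool" where
  "bipartition V E A B \<longleftrightarrow> A \<union> B = V \<and> A \<inter> B = {} \<and>
     (\<forall>x y. E x y \<longrightarrow> (x \<in> A \<and> y \<in> B) \<or> (x \<in> B \<and> y \<in> A))"

definition closed_nbhd :: "'a set \<Rightarrow> ('a \<Rightarrow> 'a \<Rightarrow> bool) \<Rightarrow> 'a \<Rightarrow> 'a set" where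
  "closed_nbhd V E a = insert a {x \<in> V. E a x}"

definition is_1_join :: "'a set \<Rightarrow> ('a \<Rightarrow> 'a \<Rightarrow> bool) \<Rightarrow> 'a set \<Rightarrow> 'a set \<Rightarrow> bool" where
  "is_1_join V E V1 V2 \<longleftrightarrow> V1 \<union> V2 = V \<and> V1 \<inter> V2 = {} \<and> card V1 \<ge> 2 \<and> card V2 \<ge> 2 \<and>
     (\<exists>X1 X2. X1 \<subseteq> V1 \<and> X2 \<subseteq> V2 \<and>
        (\<forall>x\<in>V1. \<forall>y\<in>V2. E x y \<longleftrightarrow> x \<in> X1 \<and> y \<in> X2))"

definition admits_1_join :: "'a set \<Rightarrow> ('a \<Rightarrow> 'a \<Rightarrow> bool) \<Rightarrow> bool" where
  "admits_1_join V E \<longleftrightarrow> (\<exists>V1 V2. is_1_join V E V1 V2)"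

end

theory Submission
  imports Defs
begin

lemma path_mono:
  assumes "(\<lambda>u v. u \<in> S \<and> v \<in> S \<and> E u v)\<^sup>*\<^sup>* x y" "S \<subseteq> T"
  shows "(\<lambda>u v. u \<in> T \<and> v \<in> T \<and> E u v)\<^sup>*\<^sup>* x y"
  using assms by (induction rule: rtranclp_induct) (auto intro: rtranclp.rtrancl_into_rtrancl)

lemma path_closed:
  assumes "(\<lambda>u v. u \<in> T \<and> v \<in> T \<and> E u v)\<^sup>*\<^sup>* x y" "x \<in> S"
    "\<And>u w. u \<in> S \<Longrightarrow> E u w \<Longrightarrow> w \<in> S"
  shows "y \<in> S"
  using assms by (induction rule: rtranclp_induct) auto

lemma conn_single: "connected_on E {v}"
  unfolding connected_on_def by auto

lemma conn_insert:
  assumes "connected_on E C" "c \<in> C" "E c v" "E v c"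
  shows "connected_on E (insert v C)"
  unfolding connected_on_def
proof (intro ballI)
  let ?R = "\<lambda>u w. u \<in> insert v C \<and> w \<in> insert v C \<and> E u w"
  have in_C: "?R\<^sup>*\<^sup>* x y" if "x \<in> C" "y \<in> C" for x y
    using path_mono[of C E x y "insert v C"] assms(1) that unfolding connected_on_def by auto
  have cv: "?R\<^sup>*\<^sup>* c v" and vc: "?R\<^sup>*\<^sup>* v c" using assms by auto
  fix x y assume x: "x \<in> insert v C" and y: "y \<in> insert v C"
  show "?R\<^sup>*\<^sup>* x y"
  proof (cases "x = v")
    case True
    show ?thesis
    proof (cases "y = v")
      case True then show ?thesis using \<open>x = v\<close> by simp
    next
      case False then have "y \<in> C" using y by auto
      then show ?thesis using True rtranclp_trans[OF vc in_C[OF assms(2)]] by simp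
    qed
  next
    case False then have xC: "x \<in> C" using x by auto
    show ?thesis
    proof (cases "y = v")
      case True then show ?thesis using rtranclp_trans[OF in_C[OF xC assms(2)] cv] by simp
    next
      case False then have "y \<in> C" using y by auto
      then show ?thesis using in_C xC by auto
    qed
  qed
qed

theorem mainTheorem19:
  fixes V :: "'a set" and E :: "'a \<Rightarrow> 'a \<Rightarrow> bool" and A B :: "'a set"
  assumes "graph V E"
    and "connected_on E V"
    and "bipartition V E A B"
    and "card A \<ge> 2" and "card B \<ge> 2"
    and "\<not> admits_1_join V E"
  shows "\<exists>a\<in>A. connected_on E (V - closed_nbhd V E a)"
proof (rule ccontr)
  assume "\<not> ?thesis"
  hence nc: "\<And>a. a \<in> A \<Longrightarrow> \<not> connected_on E (V - closed_nbhd V E a)" by blast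
  have finV: "finite V" using assms(1) unfolding graph_def by blast
  have EV: "\<And>x y. E x y \<Longrightarrow> x \<in> V \<and> y \<in> V" and Esym: "\<And>x y. E x y \<Longrightarrow> E y x"
    and Eirr: "\<And>x. \<not> E x x"
    using assms(1) unfolding graph_def by blast+
  have AB: "A \<union> B = V" "A \<inter> B = {}"
    and bip: "\<And>x y. E x y \<Longrightarrow> (x \<in> A \<and> y \<in> B) \<or> (x \<in> B \<and> y \<in> A)"
    using assms(3) unfolding bipartition_def by blast+
  have AA: "\<And>x y. x \<in> A \<Longrightarrow> y \<in> A \<Longrightarrow> \<not> E x y" using bip AB by blast
  have N: "\<And>a. closed_nbhd V E a = insert a {x \<in> V. E a x}" by (simp add: closed_nbhd_def)
  define P where "P = (\<lambda>(a,C). a \<in> A \<and> C \<subseteq> V - closed_nbhd V E a \<and> C \<noteq> {} \<and> connected_on E C)"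
  obtain a0 where a0: "a0 \<in> A" using assms(4) by (metis card.empty ex_in_conv not_numeral_le_zero)
  have "V - closed_nbhd V E a0 \<noteq> {}"
    using nc[OF a0] unfolding connected_on_def by auto
  then obtain v where v: "v \<in> V - closed_nbhd V E a0" by blast
  have "P (a0, {v})" unfolding P_def using a0 v conn_single by auto
  moreover have "\<forall>y. P y \<longrightarrow> card (snd y) < Suc (card V)"
  proof (intro allI impI)
    fix y assume "P y"
    hence "snd y \<subseteq> V" unfolding P_def by (auto split: prod.splits)
    thus "card (snd y) < Suc (card V)" using card_mono[OF finV] by (simp add: le_imp_less_Suc)
  qed
  ultimately obtain x where "P x" and xmax: "\<forall>y. P y \<longrightarrow> card (snd y) \<le> card (snd x)"
    using ex_has_greatest_nat[of P _ "\<lambda>y. card (snd y)"] by blast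
  then obtain a C where xd: "x = (a, C)" by (cases x)
  have aA: "a \<in> A" and CV: "C \<subseteq> V - closed_nbhd V E a" and Cne: "C \<noteq> {}"
    and Cconn: "connected_on E C"
    using \<open>P x\<close> unfolding xd P_def by auto
  have max: "\<And>a' C'. P (a', C') \<Longrightarrow> card C' \<le> card C" using xmax xd by force
  have finC: "finite C" using CV finV finite_subset by blast
  have aV: "a \<in> V" using aA AB by blast
  have closedC: "\<And>c w. c \<in> C \<Longrightarrow> w \<in> V - closed_nbhd V E a \<Longrightarrow> E c w \<Longrightarrow> w \<in> C"
  proof (rule ccontr)
    fix c w assume c: "c \<in> C" and w: "w \<in> V - closed_nbhd V E a" and "E c w" and "w \<notin> C"
    have "P (a, insert w C)" unfolding P_def using aA CV w conn_insert[OF Cconn c \<open>E c w\<close> Esym[OF \<open>E c w\<close>]]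
      by auto
    from max[OF this] show False using finC \<open>w \<notin> C\<close> by auto
  qed
  define Y where "Y = {y \<in> V. E a y \<and> (\<exists>c\<in>C. E c y)}"
  define W where "W = (V - closed_nbhd V E a) - C"
  have "W \<noteq> {}"
  proof
    assume "W = {}"
    hence "V - closed_nbhd V E a = C" using CV unfolding W_def by blast
    thus False using nc[OF aA] Cconn by simp
  qed
  then obtain d0 where d0: "d0 \<in> W" by blast
  have WA: "\<And>d y. d \<in> W \<Longrightarrow> d \<in> A \<Longrightarrow> y \<in> Y \<Longrightarrow> E d y"
  proof (rule ccontr)
    fix d y assume d: "d \<in> W" "d \<in> A" and y: "y \<in> Y" and nd: "\<not> E d y"
    obtain c where c: "c \<in> C" "E c y" using y unfolding Y_def by blast
    have ay: "E a y" "y \<in> V" using y unfolding Y_def by auto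
    have yC: "y \<notin> C" using CV ay N by auto
    have aC: "a \<notin> C" using CV N by auto
    have ya: "y \<noteq> a" using ay Eirr by auto
    have da: "d \<noteq> a" using d N unfolding W_def by auto
    have dy: "d \<noteq> y" using d ay N unfolding W_def by auto
    have dC: "\<And>c'. c' \<in> C \<Longrightarrow> c' \<noteq> d \<and> \<not> E d c'"
    proof -
      fix c' assume c': "c' \<in> C"
      have "c' \<noteq> d" using c' d unfolding W_def by auto
      moreover have "\<not> E d c'"
      proof
        assume "E d c'"
        hence "d \<in> C" using closedC[OF c' _ Esym] d unfolding W_def by blast
        thus False using d unfolding W_def by blast
      qed
      ultimately show "c' \<noteq> d \<and> \<not> E d c'" by blast
    qed
    have c1: "connected_on E (insert y C)" using conn_insert[OF Cconn c(1) c(2) Esym[OF c(2)]] .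
    have c2: "connected_on E (insert a (insert y C))"
      using conn_insert[OF c1 _ Esym[OF ay(1)] ay(1)] by simp
    have "P (d, insert a (insert y C))"
      unfolding P_def using d(2) c2 aV ay CV dC da dy nd AA[OF d(2) aA] N
      by auto
    from max[OF this] show False using finC yC aC ya by auto
  qed
  have Yne: "Y \<noteq> {}"
  proof
    assume Y0: "Y = {}"
    have cl: "\<And>u w. u \<in> C \<Longrightarrow> E u w \<Longrightarrow> w \<in> C"
    proof -
      fix u w assume u: "u \<in> C" and uw: "E u w"
      have wV: "w \<in> V" using EV uw by blast
      show "w \<in> C"
      proof (cases "w \<in> closed_nbhd V E a")
        case False thus ?thesis using closedC[OF u _ uw] wV by blast
      next
        case True
        hence "w = a \<or> E a w" using N by auto
        moreover have "w \<noteq> a" using u uw CV N Esym by auto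
        ultimately have "w \<in> Y" unfolding Y_def using wV u uw by auto
        thus ?thesis using Y0 by blast
      qed
    qed
    obtain c where c: "c \<in> C" using Cne by blast
    have "(\<lambda>u v. u \<in> V \<and> v \<in> V \<and> E u v)\<^sup>*\<^sup>* c a" using assms(2) c CV aV unfolding connected_on_def by blast
    hence "a \<in> C" by (rule path_closed) (use c cl in auto)
    thus False using CV N by auto
  qed
  define V1 where "V1 = C \<union> Y"
  define V2 where "V2 = V - V1"
  have YN: "Y \<subseteq> closed_nbhd V E a" unfolding Y_def N by auto
  have CY: "C \<inter> Y = {}" using CV YN by blast
  have finY: "finite Y" using finV unfolding Y_def by auto
  have "card V1 = card C + card Y" unfolding V1_def using card_Un_disjoint[OF finC finY CY] .
  moreover have "card C \<ge> 1" "card Y \<ge> 1" using Cne Yne finC finY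
    by (auto simp: Suc_le_eq card_gt_0_iff)
  ultimately have c1: "card V1 \<ge> 2" by linarith
  have aV2: "a \<in> V2" unfolding V2_def V1_def Y_def using aV CV N Eirr by auto
  have dV2: "d0 \<in> V2" unfolding V2_def V1_def Y_def using d0 N unfolding W_def by auto
  have "a \<noteq> d0" using d0 N unfolding W_def by auto
  hence "card {a, d0} = 2" by simp
  moreover have "card {a, d0} \<le> card V2" using aV2 dV2 finV unfolding V2_def by (intro card_mono) auto
  ultimately have c2: "card V2 \<ge> 2" by linarith
  have key: "\<forall>x\<in>V1. \<forall>y\<in>V2. E x y \<longleftrightarrow> x \<in> Y \<and> y \<in> V2 \<inter> A"
  proof (intro ballI)
    fix x y assume x: "x \<in> V1" and y: "y \<in> V2"
    show "E x y \<longleftrightarrow> x \<in> Y \<and> y \<in> V2 \<inter> A"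
    proof (cases "x \<in> C")
      case True
      have "x \<notin> Y" using True CY by blast
      moreover have "\<not> E x y"
      proof
        assume xy: "E x y"
        have yV: "y \<in> V" "y \<notin> C" "y \<notin> Y" using y unfolding V2_def V1_def by auto
        show False
        proof (cases "y \<in> closed_nbhd V E a")
          case False thus False using closedC[OF True _ xy] yV by blast
        next
          case True
          hence "y = a \<or> E a y" using N by auto
          moreover have "y \<noteq> a" using \<open>x \<in> C\<close> xy CV N Esym by auto
          ultimately have "y \<in> Y" unfolding Y_def using yV \<open>x \<in> C\<close> xy by auto
          thus False using yV by blast
        qed
      qed
      ultimately show ?thesis by blast
    next
      case False
      hence xY: "x \<in> Y" using x unfolding V1_def by blast
      hence xB: "x \<in> B" using bip aA AB unfolding Y_def by blast
      show ?thesis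
      proof
        assume "E x y" thus "x \<in> Y \<and> y \<in> V2 \<inter> A" using xY xB bip AB y by blast
      next
        assume "x \<in> Y \<and> y \<in> V2 \<inter> A"
        hence yA: "y \<in> A" by blast
        show "E x y"
        proof (cases "y = a")
          case True thus ?thesis using xY Esym unfolding Y_def by blast
        next
          case False
          have "y \<notin> closed_nbhd V E a" using False N AA[OF aA yA] by auto
          hence "y \<in> W" using y unfolding W_def V2_def V1_def by auto
          thus ?thesis using WA[OF _ yA xY] Esym by blast
        qed
      qed
    qed
  qed
  have "is_1_join V E V1 V2"
    unfolding is_1_join_def
    apply (intro conjI)
    subgoal unfolding V2_def V1_def Y_def using CV by auto
    subgoal unfolding V2_def by auto
    subgoal using c1 .
    subgoal using c2 .
    subgoal apply (rule exI[of _ Y], rule exI[of _ "V2 \<inter> A"]) using key unfolding V1_def by auto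
    done
  thus False using assms(6) by (auto simp: admits_1_join_def)
qed

end
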